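(* The restrictions of $g$ to $\Omega_2$, $\Omega_3$ and $\Omega_-$ are Lipschitz on bounded sets. More precisely, for every $\bar M>0$ there is a constant $C(\bar M)$ such that $$|g(x)-g(\tilde x)|\le C(\bar M)\big(|Z-\tilde Z|+(|x_7|+|\tilde x_7|)|x_8-\tilde x_8|\big)$$ whenever $x,\tilde x$ both lie in $\Omega_2$, or both lie in $\Omega_3$, or both lie in $\Omega_-$, and all components of $x$ and $\tilde x$ are bounded in absolute value by $\bar M$. Here $Z=(x_4,x_5,x_6,x_7)$, $\tilde Z=(\tilde x_4,\tilde x_5,\tilde x_6,\tilde x_7)$.
   Context: For $x=(x_1,\dots,x_8)\in\mathbb R^8$ let $g_1(x)=|x_5|+2|x_7x_8|+2x_4$, $g_2(x)=x_4+x_6$, $\Omega_1=\{x: g_1(x)\le g_2(x),\ x_5\le0,\ x_7+x_8x_4=0\}$, and $g(x)=g_1(x)$ for $x\in\Omega_1$, $g(x)=g_2(x)$ otherwise. Let $\Omega_2=(\mathbb R^8\setminus\Omega_1)\cap\{x:x_7+x_8x_4=0\}$, $\Omega_3=\{x:x_7+x_8x_4\ne0\}$, $\Omega_-=\{x: x_5\le0,\ x_7+x_8x_4=0\}$. $|\cdot|$ denotes the Euclidean norm. (In the paper's notation $x=(y,\bar U,c,y_\xi,U_\xi,h,\bar r,k)$.) *)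

theory Defs
  imports "HOL-Analysis.Analysis"
begin

definition g1 :: "real ^ 8 \<Rightarrow> real" where
  "g1 x = \<bar>x$5\<bar> + 2 * \<bar>x$7 * x$8\<bar> + 2 * x$4"

definition g2 :: "real ^ 8 \<Rightarrow> real" where
  "g2 x = x$4 + x$6"

definition Omega1 :: "(real ^ 8) set" where
  "Omega1 = {x. g1 x \<le> g2 x \<and> x$5 \<le> 0 \<and> x$7 + x$8 * x$4 = 0}"

definition g :: "real ^ 8 \<Rightarrow> real" where
  "g x = (if x \<in> Omega1 then g1 x else g2 x)"

definition Omega2 :: "(real ^ 8) set" where
  "Omega2 = (UNIV - Omega1) \<inter> {x. x$7 + x$8 * x$4 = 0}"

definition Omega3 :: "(real ^ 8) set" where
  "Omega3 = {x. x$7 + x$8 * x$4 \<noteq> 0}"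

definition Omega_minus :: "(real ^ 8) set" where
  "Omega_minus = {x. x$5 \<le> 0 \<and> x$7 + x$8 * x$4 = 0}"

definition Zdist :: "real ^ 8 \<Rightarrow> real ^ 8 \<Rightarrow> real" where
  "Zdist x y = sqrt ((x$4 - y$4)^2 + (x$5 - y$5)^2 + (x$6 - y$6)^2 + (x$7 - y$7)^2)"

end

theory Submission
  imports Defs
begin

lemma zd: fixes x y :: "real^8"
  shows "\<bar>x$4 - y$4\<bar> \<le> Zdist x y" "\<bar>x$5 - y$5\<bar> \<le> Zdist x y"
        "\<bar>x$6 - y$6\<bar> \<le> Zdist x y" "\<bar>x$7 - y$7\<bar> \<le> Zdist x y"
  unfolding Zdist_def
  by (rule real_le_rsqrt, simp add: power2_abs)+

lemma minlip: "\<bar>(a::real) - c\<bar> \<le> K \<Longrightarrow> \<bar>b - d\<bar> \<le> K \<Longrightarrow> \<bar>min a b - min c d\<bar> \<le> K"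
  by (simp add: abs_le_iff min_def)

lemma g2lip: "\<bar>g2 x - g2 y\<bar> \<le> 2 * Zdist x y"
  using zd[of x y] unfolding g2_def by simp

lemma prodlip:
  fixes a b c d M :: real
  assumes "\<bar>b\<bar> \<le> M"
  shows "\<bar>a*b - c*d\<bar> \<le> M*\<bar>a - c\<bar> + (\<bar>a\<bar>+\<bar>c\<bar>)*\<bar>b-d\<bar>"
proof -
  have "a*b - c*d = (a-c)*b + c*(b-d)" by (simp add: algebra_simps)
  hence "\<bar>a*b - c*d\<bar> \<le> \<bar>a-c\<bar>*\<bar>b\<bar> + \<bar>c\<bar>*\<bar>b-d\<bar>" by (simp add: abs_mult[symmetric] abs_triangle_ineq)
  also have "\<dots> \<le> M*\<bar>a - c\<bar> + (\<bar>a\<bar>+\<bar>c\<bar>)*\<bar>b-d\<bar>"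
  proof -
    have "\<bar>a-c\<bar>*\<bar>b\<bar> \<le> \<bar>a-c\<bar>*M" using assms by (simp add: mult_left_mono)
    moreover have "\<bar>c\<bar>*\<bar>b-d\<bar> \<le> (\<bar>a\<bar>+\<bar>c\<bar>)*\<bar>b-d\<bar>" by (simp add: mult_right_mono)
    ultimately show ?thesis by (simp add: mult.commute)
  qed
  finally show ?thesis .
qed

lemma habs: "\<bar>(\<bar>p\<bar> + 2*\<bar>q\<bar> + 2*r) - (\<bar>p'\<bar> + 2*\<bar>q'\<bar> + 2*(r'::real))\<bar> \<le> \<bar>p-p'\<bar> + 2*\<bar>q-q'\<bar> + 2*\<bar>r-r'\<bar>"
  by (smt (verit))

lemma linh: "(P::real) \<le> MA + W \<Longrightarrow> MA \<le> MZ \<Longrightarrow> B \<le> Z \<Longrightarrow> D \<le> Z \<Longrightarrow> 0 \<le> Z \<Longrightarrow> D + 2*P + 2*B \<le> 2*MZ + 5*Z + 2*W"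
  by linarith

lemma g1lip:
  assumes "\<bar>x$8\<bar> \<le> M" "M > 0"
  shows "\<bar>g1 x - g1 y\<bar> \<le> (2*M+5) * (Zdist x y + (\<bar>x$7\<bar> + \<bar>y$7\<bar>) * \<bar>x$8 - y$8\<bar>)"
proof -
  have p: "\<bar>x$7*x$8 - y$7*y$8\<bar> \<le> M*\<bar>x$7 - y$7\<bar> + (\<bar>x$7\<bar>+\<bar>y$7\<bar>)*\<bar>x$8-y$8\<bar>"
    using prodlip assms(1) by blast
  have q: "\<bar>\<bar>x$7*x$8\<bar> - \<bar>y$7*y$8\<bar>\<bar> \<le> \<bar>x$7*x$8 - y$7*y$8\<bar>" by (rule abs_triangle_ineq3)
  have r: "\<bar>\<bar>x$5\<bar> - \<bar>y$5\<bar>\<bar> \<le> \<bar>x$5 - y$5\<bar>" by (rule abs_triangle_ineq3)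
  have m: "M*\<bar>x$7 - y$7\<bar> \<le> M * Zdist x y" using zd(4) assms(2) by (simp add: mult_left_mono)
  have W: "0 \<le> (\<bar>x$7\<bar> + \<bar>y$7\<bar>) * \<bar>x$8 - y$8\<bar>" by simp
  have Z: "0 \<le> Zdist x y" unfolding Zdist_def by simp
  have "\<bar>g1 x - g1 y\<bar> \<le> \<bar>x$5 - y$5\<bar> + 2*\<bar>x$7*x$8 - y$7*y$8\<bar> + 2*\<bar>x$4-y$4\<bar>"
    unfolding g1_def by (rule habs)
  also have "\<dots> \<le> (2*M+5) * Zdist x y + 2*((\<bar>x$7\<bar> + \<bar>y$7\<bar>) * \<bar>x$8 - y$8\<bar>)"
  proof -
    have e: "(2*M+5) * Zdist x y = 2*(M * Zdist x y) + 5 * Zdist x y" by (simp add: algebra_simps)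
    show ?thesis unfolding e by (rule linh[OF p m zd(1) zd(2) Z])
  qed
  also have "\<dots> \<le> (2*M+5) * (Zdist x y + (\<bar>x$7\<bar> + \<bar>y$7\<bar>) * \<bar>x$8 - y$8\<bar>)"
    using W assms(2) by (simp add: algebra_simps)
  finally show ?thesis .
qed

theorem lemma4p2:
  shows "\<forall>M::real. M > 0 \<longrightarrow> (\<exists>C::real. \<forall>x y :: real ^ 8.
     ((x \<in> Omega2 \<and> y \<in> Omega2) \<or> (x \<in> Omega3 \<and> y \<in> Omega3) \<or>
      (x \<in> Omega_minus \<and> y \<in> Omega_minus)) \<and>
     (\<forall>i. \<bar>x$i\<bar> \<le> M) \<and> (\<forall>i. \<bar>y$i\<bar> \<le> M)
     \<longrightarrow> \<bar>g x - g y\<bar> \<le> C * (Zdist x y + (\<bar>x$7\<bar> + \<bar>y$7\<bar>) * \<bar>x$8 - y$8\<bar>))"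
proof (intro allI impI)
  fix M :: real assume M: "M > 0"
  show "\<exists>C. \<forall>x y :: real ^ 8.
     ((x \<in> Omega2 \<and> y \<in> Omega2) \<or> (x \<in> Omega3 \<and> y \<in> Omega3) \<or>
      (x \<in> Omega_minus \<and> y \<in> Omega_minus)) \<and>
     (\<forall>i. \<bar>x$i\<bar> \<le> M) \<and> (\<forall>i. \<bar>y$i\<bar> \<le> M)
     \<longrightarrow> \<bar>g x - g y\<bar> \<le> C * (Zdist x y + (\<bar>x$7\<bar> + \<bar>y$7\<bar>) * \<bar>x$8 - y$8\<bar>)"
  proof (intro exI[of _ "2*M+5"] allI impI)
    fix x y :: "real^8"
    assume H: "((x \<in> Omega2 \<and> y \<in> Omega2) \<or> (x \<in> Omega3 \<and> y \<in> Omega3) \<or>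
      (x \<in> Omega_minus \<and> y \<in> Omega_minus)) \<and>
     (\<forall>i. \<bar>x$i\<bar> \<le> M) \<and> (\<forall>i. \<bar>y$i\<bar> \<le> M)"
    define R where "R = Zdist x y + (\<bar>x$7\<bar> + \<bar>y$7\<bar>) * \<bar>x$8 - y$8\<bar>"
    have W: "0 \<le> (\<bar>x$7\<bar> + \<bar>y$7\<bar>) * \<bar>x$8 - y$8\<bar>" by simp
    have Z: "0 \<le> Zdist x y" unfolding Zdist_def by simp
    have G2: "\<bar>g2 x - g2 y\<bar> \<le> (2*M+5) * R"
    proof -
      have "0 \<le> (2*M+5) * ((\<bar>x$7\<bar> + \<bar>y$7\<bar>) * \<bar>x$8 - y$8\<bar>)" using W M by simp
      moreover have "2 * Zdist x y \<le> (2*M+5) * Zdist x y" using Z M by (simp add: mult_right_mono)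
      ultimately have "2 * Zdist x y \<le> (2*M+5) * R" unfolding R_def by (simp add: distrib_left)
      thus ?thesis using g2lip[of x y] by linarith
    qed
    have G1: "\<bar>g1 x - g1 y\<bar> \<le> (2*M+5) * R"
    proof -
      have "\<bar>x$8\<bar> \<le> M" using H by blast
      thus ?thesis using g1lip[of x M y] M unfolding R_def by blast
    qed
    show "\<bar>g x - g y\<bar> \<le> (2*M+5) * R"
    proof (cases "(x \<in> Omega2 \<and> y \<in> Omega2) \<or> (x \<in> Omega3 \<and> y \<in> Omega3)")
      case True
      hence "x \<notin> Omega1 \<and> y \<notin> Omega1" unfolding Omega2_def Omega3_def Omega1_def by auto
      thus ?thesis using G2 unfolding g_def by simp
    next
      case False
      hence "x \<in> Omega_minus \<and> y \<in> Omega_minus" using H by blast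
      hence "g x = min (g1 x) (g2 x)" "g y = min (g1 y) (g2 y)"
        unfolding g_def Omega_minus_def Omega1_def by auto
      thus ?thesis using minlip[OF G1 G2] by simp
    qed
  qed
qed

end
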